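(* Let $\mathcal{H}=(X,\mathcal{E})$ be a hyperstar, and let $c^*\in X$ be a vertex contained in every edge of $\mathcal{H}$. Let $\mathcal{H}^-=(X\setminus\{c^*\},\{E\setminus\{c^*\}:E\in\mathcal{E}\})$. Then $\mathrm{dec}(\mathcal{H})=\tau(\mathcal{H}^-)=\tau_2(\mathcal{H})-1$ and $\overline{\chi}(\mathcal{H})=\alpha(\mathcal{H}^-)+1$.
   Context: A hypergraph $\mathcal{H}=(X,\mathcal{E})$ has a finite vertex set $X$, $|X|=n$, and edges that are subsets of $X$ with at least 2 vertices; it is a hyperstar if some vertex lies in every edge. A C-coloring is a map $\varphi:X\to\mathbb{N}$ such that every edge contains two distinct vertices of the same color; $\overline{\chi}(\mathcal{H})$ is the maximum number of colors in a C-coloring and $\mathrm{dec}(\mathcal{H})=n-\overline{\chi}(\mathcal{H})$. For a set system (possibly with edges of size 1), $\tau$ is the minimum size of a vertex set meeting every edge and $\alpha$ is the maximum size of a vertex set containing no edge entirely. $\tau_2(\mathcal{H})$ is the minimum size of a set $T\subseteq X$ with $|E\cap T|\ge 2$ for every edge $E$. *)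

theory Defs
  imports Main
begin

definition hypergraph :: "'a set \<Rightarrow> 'a set set \<Rightarrow> bool" where
  "hypergraph X Es \<longleftrightarrow> finite X \<and> (\<forall>E\<in>Es. E \<subseteq> X \<and> card E \<ge> 2)"

definition hyperstar :: "'a set \<Rightarrow> 'a set set \<Rightarrow> bool" where
  "hyperstar X Es \<longleftrightarrow> hypergraph X Es \<and> (\<exists>c\<in>X. \<forall>E\<in>Es. c \<in> E)"

definition C_coloring :: "'a set \<Rightarrow> 'a set set \<Rightarrow> ('a \<Rightarrow> nat) \<Rightarrow> bool" where
  "C_coloring X Es \<phi> \<longleftrightarrow> (\<forall>E\<in>Es. \<exists>x\<in>E. \<exists>y\<in>E. x \<noteq> y \<and> \<phi> x = \<phi> y)"

definition upper_chi :: "'a set \<Rightarrow> 'a set set \<Rightarrow> nat" where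
  "upper_chi X Es = Max {card (\<phi> ` X) | \<phi>. C_coloring X Es \<phi>}"

definition dec :: "'a set \<Rightarrow> 'a set set \<Rightarrow> nat" where
  "dec X Es = card X - upper_chi X Es"

definition tau :: "'a set \<Rightarrow> 'a set set \<Rightarrow> nat" where
  "tau V F = Min {card T | T. T \<subseteq> V \<and> (\<forall>E\<in>F. E \<inter> T \<noteq> {})}"

definition alpha :: "'a set \<Rightarrow> 'a set set \<Rightarrow> nat" where
  "alpha V F = Max {card S | S. S \<subseteq> V \<and> (\<forall>E\<in>F. \<not> E \<subseteq> S)}"

definition tau2 :: "'a set \<Rightarrow> 'a set set \<Rightarrow> nat" where
  "tau2 X Es = Min {card T | T. T \<subseteq> X \<and> (\<forall>E\<in>Es. card (E \<inter> T) \<ge> 2)}"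

end

theory Submission
  imports Defs
begin

lemma card_set_finite:
  assumes "finite V" "\<And>T. P T \<Longrightarrow> T \<subseteq> V"
  shows "finite {card T | T. P T}"
proof (rule finite_subset[of _ "{..card V}"])
  show "{card T | T. P T} \<subseteq> {..card V}"
  proof
    fix k assume "k \<in> {card T | T. P T}"
    then obtain T where "P T" "k = card T" by blast
    then show "k \<in> {..card V}" using assms card_mono by fastforce
  qed
qed simp

lemma mem_card_set: "P T \<Longrightarrow> card T \<in> {card T | T. P T}"
  by blast

lemma Max_card_ex:
  assumes "finite {card T | T. P T}" "P T0"
  shows "\<exists>T. P T \<and> Max {card T | T. P T} = card T"
proof -
  have "{card T | T. P T} \<noteq> {}" using mem_card_set[of P T0, OF assms(2)] by (rule ex_in_conv[THEN iffD1, OF exI])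
  then have "Max {card T | T. P T} \<in> {card T | T. P T}" by (rule Max_in[OF assms(1)])
  then show ?thesis by blast
qed

lemma Min_card_ex:
  assumes "finite {card T | T. P T}" "P T0"
  shows "\<exists>T. P T \<and> Min {card T | T. P T} = card T"
proof -
  have "{card T | T. P T} \<noteq> {}" using mem_card_set[of P T0, OF assms(2)] by (rule ex_in_conv[THEN iffD1, OF exI])
  then have "Min {card T | T. P T} \<in> {card T | T. P T}" by (rule Min_in[OF assms(1)])
  then show ?thesis by blast
qed

lemma Max_card_ge:
  assumes "finite {card T | T. P T}" "P T0"
  shows "card T0 \<le> Max {card T | T. P T}"
  by (rule Max_ge[OF assms(1) mem_card_set[of P T0, OF assms(2)]])

lemma Min_card_le:
  assumes "finite {card T | T. P T}" "P T0"
  shows "Min {card T | T. P T} \<le> card T0"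
  by (rule Min_le[OF assms(1) mem_card_set[of P T0, OF assms(2)]])

lemma tau_le:
  assumes "finite V" "T \<subseteq> V" "\<forall>E\<in>F. E \<inter> T \<noteq> {}"
  shows "tau V F \<le> card T"
  unfolding tau_def
  by (rule Min_card_le[where P="\<lambda>T. T \<subseteq> V \<and> (\<forall>E\<in>F. E \<inter> T \<noteq> {})"],
      rule card_set_finite[OF assms(1)], simp, simp add: assms(2,3))

lemma tau_ex:
  assumes "finite V" "\<forall>E\<in>F. E \<subseteq> V \<and> E \<noteq> {}"
  shows "\<exists>T. T \<subseteq> V \<and> (\<forall>E\<in>F. E \<inter> T \<noteq> {}) \<and> tau V F = card T"
proof -
  have h: "\<forall>E\<in>F. E \<inter> V \<noteq> {}" using assms(2) by (simp add: Int_absorb2)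
  have fin: "finite {card T | T. T \<subseteq> V \<and> (\<forall>E\<in>F. E \<inter> T \<noteq> {})}"
    by (rule card_set_finite[OF assms(1)]) simp
  obtain T where T: "T \<subseteq> V \<and> (\<forall>E\<in>F. E \<inter> T \<noteq> {})" "Min {card T | T. T \<subseteq> V \<and> (\<forall>E\<in>F. E \<inter> T \<noteq> {})} = card T"
    using Min_card_ex[of "\<lambda>T. T \<subseteq> V \<and> (\<forall>E\<in>F. E \<inter> T \<noteq> {})" V, OF fin] h assms by auto
  then show ?thesis unfolding tau_def by auto
qed

lemma alpha_ge:
  assumes "finite V" "S \<subseteq> V" "\<forall>E\<in>F. \<not> E \<subseteq> S"
  shows "card S \<le> alpha V F"
  unfolding alpha_def
  by (rule Max_card_ge[where P="\<lambda>S. S \<subseteq> V \<and> (\<forall>E\<in>F. \<not> E \<subseteq> S)"],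
      rule card_set_finite[OF assms(1)], simp, simp add: assms(2,3))

lemma alpha_ex:
  assumes "finite V" "\<forall>E\<in>F. E \<noteq> {}"
  shows "\<exists>S. S \<subseteq> V \<and> (\<forall>E\<in>F. \<not> E \<subseteq> S) \<and> alpha V F = card S"
proof -
  have h: "\<forall>E\<in>F. \<not> E \<subseteq> {}" using assms(2) by simp
  have fin: "finite {card T | T. T \<subseteq> V \<and> (\<forall>E\<in>F. \<not> E \<subseteq> T)}"
    by (rule card_set_finite[OF assms(1)]) simp
  obtain T where T: "T \<subseteq> V \<and> (\<forall>E\<in>F. \<not> E \<subseteq> T)" "Max {card T | T. T \<subseteq> V \<and> (\<forall>E\<in>F. \<not> E \<subseteq> T)} = card T"
    using Max_card_ex[of "\<lambda>T. T \<subseteq> V \<and> (\<forall>E\<in>F. \<not> E \<subseteq> T)" "{}", OF fin] h assms by auto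
  then show ?thesis unfolding alpha_def by auto
qed

lemma tau2_le:
  assumes "finite X" "T \<subseteq> X" "\<forall>E\<in>Es. card (E \<inter> T) \<ge> 2"
  shows "tau2 X Es \<le> card T"
  unfolding tau2_def
  by (rule Min_card_le[where P="\<lambda>T. T \<subseteq> X \<and> (\<forall>E\<in>Es. card (E \<inter> T) \<ge> 2)"],
      rule card_set_finite[OF assms(1)], simp, simp add: assms(2,3))

lemma tau2_ex:
  assumes "finite X" "\<forall>E\<in>Es. E \<subseteq> X \<and> card E \<ge> 2"
  shows "\<exists>T. T \<subseteq> X \<and> (\<forall>E\<in>Es. card (E \<inter> T) \<ge> 2) \<and> tau2 X Es = card T"
proof -
  have h: "\<forall>E\<in>Es. card (E \<inter> X) \<ge> 2" using assms(2) by (simp add: Int_absorb2)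
  have fin: "finite {card T | T. T \<subseteq> X \<and> (\<forall>E\<in>Es. card (E \<inter> T) \<ge> 2)}"
    by (rule card_set_finite[OF assms(1)]) simp
  obtain T where T: "T \<subseteq> X \<and> (\<forall>E\<in>Es. card (E \<inter> T) \<ge> 2)" "Min {card T | T. T \<subseteq> X \<and> (\<forall>E\<in>Es. card (E \<inter> T) \<ge> 2)} = card T"
    using Min_card_ex[of "\<lambda>T. T \<subseteq> X \<and> (\<forall>E\<in>Es. card (E \<inter> T) \<ge> 2)" X, OF fin] h assms by auto
  then show ?thesis unfolding tau2_def by auto
qed

lemma two_elems:
  assumes "card E \<ge> 2"
  obtains x y where "x \<in> E" "y \<in> E" "x \<noteq> y"
proof -
  have "finite E" using assms card.infinite by fastforce
  have "\<not> card E \<le> Suc 0" using assms by simp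
  then show ?thesis using that card_le_Suc0_iff_eq[OF \<open>finite E\<close>] by blast
qed

lemma chi_fin:
  assumes "finite X"
  shows "finite {card (\<phi> ` X) | \<phi>. C_coloring X Es \<phi>}"
proof (rule finite_subset[of _ "{..card X}"])
  show "{card (\<phi> ` X) | \<phi>. C_coloring X Es \<phi>} \<subseteq> {..card X}"
    using card_image_le[OF assms] by auto
qed simp

lemma chi_ge:
  assumes "finite X" "C_coloring X Es \<phi>"
  shows "card (\<phi> ` X) \<le> upper_chi X Es"
  unfolding upper_chi_def using chi_fin[OF assms(1)] assms(2) by (intro Max_ge) blast+

lemma chi_ex:
  assumes "finite X" "\<forall>E\<in>Es. card E \<ge> 2"
  shows "\<exists>\<phi>. C_coloring X Es \<phi> \<and> upper_chi X Es = card (\<phi> ` X)"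
proof -
  let ?A = "{card (\<phi> ` X) | \<phi>. C_coloring X Es \<phi>}"
  have "C_coloring X Es (\<lambda>_. 0)" unfolding C_coloring_def
  proof
    fix E assume "E \<in> Es"
    then have "card E \<ge> 2" using assms(2) by auto
    then obtain x y where "x \<in> E" "y \<in> E" "x \<noteq> y" by (rule two_elems)
    then show "\<exists>x\<in>E. \<exists>y\<in>E. x \<noteq> y \<and> (0::nat) = 0" by blast
  qed
  then have ne: "card ((\<lambda>_. 0::nat) ` X) \<in> ?A" by blast
  have "upper_chi X Es \<in> ?A" unfolding upper_chi_def using chi_fin[OF assms(1)] ne
    by (intro Min_in Max_in) auto
  then show ?thesis by blast
qed


theorem proposition2:
  fixes X :: "'a set" and Es :: "'a set set" and c :: 'a
  assumes "hyperstar X Es"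
    and "c \<in> X"
    and "\<forall>E\<in>Es. c \<in> E"
  shows "dec X Es = tau (X - {c}) ((\<lambda>E. E - {c}) ` Es)
       \<and> tau (X - {c}) ((\<lambda>E. E - {c}) ` Es) = tau2 X Es - 1
       \<and> upper_chi X Es = alpha (X - {c}) ((\<lambda>E. E - {c}) ` Es) + 1"
proof -
  define X' where "X' = X - {c}"
  define F where "F = (\<lambda>E. E - {c}) ` Es"
  have finX: "finite X" and hE: "\<forall>E\<in>Es. E \<subseteq> X \<and> card E \<ge> 2"
    using assms(1) unfolding hyperstar_def hypergraph_def by auto
  have finX': "finite X'" using finX X'_def by simp
  have cardX': "card X' = card X - 1" using assms(2) finX X'_def by simp
  have "X \<noteq> {}" using assms(2) by auto
  then have cardX: "card X \<ge> 1" using finX by (simp add: Suc_leI card_gt_0_iff)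
  have hF: "\<forall>E\<in>F. E \<subseteq> X' \<and> E \<noteq> {}"
  proof
    fix E' assume "E' \<in> F"
    then obtain E where E: "E \<in> Es" "E' = E - {c}" unfolding F_def by blast
    then have "card E \<ge> 2" "E \<subseteq> X" using hE by auto
    then obtain x y where "x \<in> E" "y \<in> E" "x \<noteq> y" using two_elems by blast
    then have "x \<in> E' \<or> y \<in> E'" using E by auto
    then have "E' \<noteq> {}" by auto
    then show "E' \<subseteq> X' \<and> E' \<noteq> {}" using E \<open>E \<subseteq> X\<close> X'_def by blast
  qed
  have hF2: "\<forall>E\<in>F. E \<noteq> {}" using hF by blast
  have A: "tau X' F + alpha X' F = card X'"
  proof -
    obtain T0 where T0: "T0 \<subseteq> X'" "\<forall>E\<in>F. E \<inter> T0 \<noteq> {}" "tau X' F = card T0"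
      using tau_ex[OF finX' hF] by blast
    have "\<forall>E\<in>F. \<not> E \<subseteq> X' - T0" using T0(2) by auto
    then have "card (X' - T0) \<le> alpha X' F" by (rule alpha_ge[OF finX' Diff_subset])
    moreover have "card (X' - T0) = card X' - card T0"
      using T0(1) finX' by (meson card_Diff_subset finite_subset)
    moreover have "card T0 \<le> card X'" using T0(1) finX' card_mono by blast
    obtain S0 where S0: "S0 \<subseteq> X'" "\<forall>E\<in>F. \<not> E \<subseteq> S0" "alpha X' F = card S0"
      using alpha_ex[OF finX' hF2] by blast
    have "\<forall>E\<in>F. E \<inter> (X' - S0) \<noteq> {}" using S0(2) hF by auto
    then have "tau X' F \<le> card (X' - S0)" by (rule tau_le[OF finX' Diff_subset])
    moreover have "card (X' - S0) = card X' - card S0"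
      using S0(1) finX' by (meson card_Diff_subset finite_subset)
    moreover have "card S0 \<le> card X'" using S0(1) finX' card_mono by blast
    ultimately show ?thesis using T0(3) S0(3) \<open>card T0 \<le> card X'\<close> by linarith
  qed
  have B1: "alpha X' F + 1 \<le> upper_chi X Es"
  proof -
    obtain S0 where S0: "S0 \<subseteq> X'" "\<forall>E\<in>F. \<not> E \<subseteq> S0" "alpha X' F = card S0"
      using alpha_ex[OF finX' hF2] by blast
    have finS0: "finite S0" using S0(1) finX' finite_subset by blast
    obtain g :: "'a \<Rightarrow> nat" and n where g: "g ` S0 = {i. i<n}" "inj_on g S0"
      using finite_imp_inj_to_nat_seg[OF finS0] by blast
    define \<phi> where "\<phi> x = (if x \<in> S0 then Suc (g x) else 0)" for x
    have cS0: "c \<notin> S0" using S0(1) X'_def by blast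
    have col: "C_coloring X Es \<phi>" unfolding C_coloring_def
    proof
      fix E assume "E \<in> Es"
      then have "E - {c} \<in> F" unfolding F_def by blast
      then obtain y where y: "y \<in> E" "y \<noteq> c" "y \<notin> S0" using S0(2) by blast
      have "c \<in> E" using assms(3) \<open>E \<in> Es\<close> by blast
      have "\<phi> c = \<phi> y" using y cS0 unfolding \<phi>_def by simp
      then show "\<exists>x\<in>E. \<exists>y\<in>E. x \<noteq> y \<and> \<phi> x = \<phi> y" using y \<open>c \<in> E\<close> by metis
    qed
    have img: "\<phi> ` X = insert 0 ((Suc \<circ> g) ` S0)"
    proof
      show "\<phi> ` X \<subseteq> insert 0 ((Suc \<circ> g) ` S0)" unfolding \<phi>_def by auto
      have "(Suc \<circ> g) ` S0 \<subseteq> \<phi> ` X"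
      proof
        fix k assume "k \<in> (Suc \<circ> g) ` S0"
        then obtain x where "x \<in> S0" "k = Suc (g x)" by auto
        then have "k = \<phi> x" "x \<in> X" unfolding \<phi>_def using S0(1) X'_def by auto
        then show "k \<in> \<phi> ` X" by blast
      qed
      moreover have "0 = \<phi> c" using cS0 unfolding \<phi>_def by simp
      then have "0 \<in> \<phi> ` X" using assms(2) by blast
      ultimately show "insert 0 ((Suc \<circ> g) ` S0) \<subseteq> \<phi> ` X" by blast
    qed
    have "inj_on (Suc \<circ> g) S0" using g(2) by (simp add: inj_on_def)
    then have "card ((Suc \<circ> g) ` S0) = card S0" by (rule card_image)
    moreover have "0 \<notin> (Suc \<circ> g) ` S0" by auto
    ultimately have "card (\<phi> ` X) = card S0 + 1" unfolding img using finS0 by simp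
    then show ?thesis using chi_ge[OF finX col] S0(3) by simp
  qed
  have B2: "upper_chi X Es \<le> alpha X' F + 1"
  proof -
    obtain \<phi> where phi: "C_coloring X Es \<phi>" "upper_chi X Es = card (\<phi> ` X)"
      using chi_ex[OF finX] hE by blast
    define K where "K = \<phi> ` X - {\<phi> c}"
    define r where "r k = (SOME x. x \<in> X \<and> \<phi> x = k)" for k
    have rK: "r k \<in> X \<and> \<phi> (r k) = k" if "k \<in> K" for k
    proof -
      have "\<exists>x. x \<in> X \<and> \<phi> x = k" using that K_def by blast
      then show ?thesis unfolding r_def by (rule someI_ex)
    qed
    have injr: "inj_on r K"
    proof (rule inj_onI)
      fix a b assume "a \<in> K" "b \<in> K" "r a = r b"
      then have "\<phi> (r a) = a" "\<phi> (r b) = b" using rK by blast+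
      then show "a = b" using \<open>r a = r b\<close> by metis
    qed
    define S where "S = r ` K"
    have "card S = card K" unfolding S_def by (rule card_image[OF injr])
    moreover have "card K = card (\<phi> ` X) - 1" unfolding K_def
      using assms(2) finX by (intro card_Diff_singleton) auto
    ultimately have cardS: "card S = card (\<phi> ` X) - 1" by simp
    have SX': "S \<subseteq> X'"
    proof
      fix x assume "x \<in> S"
      then obtain k where "k \<in> K" "x = r k" unfolding S_def by blast
      then show "x \<in> X'" using rK[of k] K_def X'_def by auto
    qed
    have indep: "\<forall>E\<in>F. \<not> E \<subseteq> S"
    proof (intro ballI notI)
      fix E' assume "E' \<in> F" "E' \<subseteq> S"
      then obtain E where E: "E \<in> Es" "E' = E - {c}" unfolding F_def by blast
      then obtain x y where xy: "x \<in> E" "y \<in> E" "x \<noteq> y" "\<phi> x = \<phi> y"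
        using phi(1) unfolding C_coloring_def by blast
      have inS: "z \<in> S" if "z \<in> E" "z \<noteq> c" for z using that E \<open>E' \<subseteq> S\<close> by blast
      have notc: "\<phi> z \<noteq> \<phi> c" if zS: "z \<in> S" for z
      proof -
        obtain k where "k \<in> K" "z = r k" using zS unfolding S_def by blast
        then show ?thesis using rK[of k] unfolding K_def by auto
      qed
      have injS: "z = w" if zw: "z \<in> S" "w \<in> S" "\<phi> z = \<phi> w" for z w
      proof -
        obtain k where "k \<in> K" "z = r k" using zw(1) unfolding S_def by blast
        moreover obtain l where "l \<in> K" "w = r l" using zw(2) unfolding S_def by blast
        ultimately show ?thesis using rK[of k] rK[of l] zw(3) by auto
      qed
      show False
      proof (cases "x = c")
        case True
        then show ?thesis using xy inS[of y] notc[of y] by auto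
      next
        case False
        show ?thesis
        proof (cases "y = c")
          case True
          then show ?thesis using xy inS[of x] notc[of x] by auto
        next
          case False
          then show ?thesis using \<open>x \<noteq> c\<close> xy inS[of x] inS[of y] injS[of x y] by auto
        qed
      qed
    qed
    have "card S \<le> alpha X' F" using alpha_ge[OF finX' SX' indep] .
    moreover have "\<phi> ` X \<noteq> {}" using assms(2) by auto
    then have "card (\<phi> ` X) \<ge> 1" using finX by (simp add: Suc_leI card_gt_0_iff)
    ultimately show ?thesis using phi(2) cardS by linarith
  qed
  have D1: "tau2 X Es \<le> tau X' F + 1"
  proof -
    obtain T0 where T0: "T0 \<subseteq> X'" "\<forall>E\<in>F. E \<inter> T0 \<noteq> {}" "tau X' F = card T0"
      using tau_ex[OF finX' hF] by blast
    define T where "T = insert c T0"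
    have TX: "T \<subseteq> X" using T0(1) assms(2) X'_def T_def by blast
    have "\<forall>E\<in>Es. card (E \<inter> T) \<ge> 2"
    proof
      fix E assume "E \<in> Es"
      then have "E - {c} \<in> F" unfolding F_def by blast
      then obtain y where y: "y \<in> E" "y \<noteq> c" "y \<in> T0" using T0(2) by blast
      have "c \<in> E" using assms(3) \<open>E \<in> Es\<close> by blast
      have "finite (E \<inter> T)" using TX finX finite_subset by blast
      moreover have "{c, y} \<subseteq> E \<inter> T" using y \<open>c \<in> E\<close> T_def by blast
      ultimately have "card {c, y} \<le> card (E \<inter> T)" by (rule card_mono)
      then show "card (E \<inter> T) \<ge> 2" using y by simp
    qed
    then have "tau2 X Es \<le> card T" using tau2_le[OF finX TX] by blast
    moreover have "finite T0" using T0(1) finX' finite_subset by blast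
    then have "card T \<le> card T0 + 1" unfolding T_def
      by (simp add: card_insert_if)
    ultimately show ?thesis using T0(3) by linarith
  qed
  have D2: "tau X' F \<le> tau2 X Es - 1"
  proof -
    obtain T2 where T2: "T2 \<subseteq> X" "\<forall>E\<in>Es. card (E \<inter> T2) \<ge> 2" "tau2 X Es = card T2"
      using tau2_ex[OF finX hE] by blast
    have finT2: "finite T2" using T2(1) finX finite_subset by blast
    show ?thesis
    proof (cases "T2 = {}")
      case True
      then have "Es = {}" using T2(2) by fastforce
      then have "F = {}" unfolding F_def by simp
      then have "tau X' F \<le> card ({}::'a set)" using tau_le[OF finX'] by blast
      then show ?thesis by simp
    next
      case False
      obtain t where t: "t \<in> T2" "c \<in> T2 \<longrightarrow> t = c" using False by blast
      define T where "T = T2 - {t}"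
      have TX': "T \<subseteq> X'" using T2(1) t unfolding X'_def T_def by auto
      have "\<forall>E\<in>F. E \<inter> T \<noteq> {}"
      proof
        fix E' assume "E' \<in> F"
        then obtain E where E: "E \<in> Es" "E' = E - {c}" unfolding F_def by blast
        then obtain x y where "x \<in> E \<inter> T2" "y \<in> E \<inter> T2" "x \<noteq> y"
          using T2(2) two_elems by blast
        then have "x \<in> E' \<inter> T \<or> y \<in> E' \<inter> T" using E t unfolding T_def by (cases "c \<in> T2") auto
        then show "E' \<inter> T \<noteq> {}" by auto
      qed
      then have "tau X' F \<le> card T" using tau_le[OF finX' TX'] by blast
      moreover have "card T = card T2 - 1" unfolding T_def using t(1) finT2 by simp
      ultimately show ?thesis using T2(3) by simp
    qed
  qed
  have B: "upper_chi X Es = alpha X' F + 1" using B1 B2 by simp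
  have D: "tau X' F = tau2 X Es - 1" using D1 D2 by linarith
  have C: "dec X Es = tau X' F" unfolding dec_def using A B cardX' cardX by linarith
  show ?thesis using B C D by (simp only: X'_def F_def)
qed

end
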